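(* Let $\bm{U}_{RU},\bm{U}_{LU},\bm{U}_{LD},\bm{U}_{RD}\in\mathcal{G}$ and define the wave speeds $S_L=2\min_{\bm{W}}\lambda_1^{(1)}(\bm{W})$, $S_R=2\max_{\bm{W}}\lambda_1^{(4)}(\bm{W})$, $S_D=2\min_{\bm{W}}\lambda_2^{(1)}(\bm{W})$, $S_U=2\max_{\bm{W}}\lambda_2^{(4)}(\bm{W})$, where $\bm{W}$ ranges over $\{\bm{U}_{LD},\bm{U}_{RD},\bm{U}_{LU},\bm{U}_{RU}\}$. Assume $S_L<0<S_R$ and $S_D<0<S_U$. Let $$\bm{U}^{\ast}=\frac{S_RS_U\bm{U}_{RU}+S_LS_D\bm{U}_{LD}-S_RS_D\bm{U}_{RD}-S_LS_U\bm{U}_{LU}}{(S_R-S_L)(S_U-S_D)}-\frac{S_U(\bm{F}_{RU}-\bm{F}_{LU})-S_D(\bm{F}_{RD}-\bm{F}_{LD})}{(S_R-S_L)(S_U-S_D)}-\frac{S_R(\bm{G}_{RU}-\bm{G}_{RD})-S_L(\bm{G}_{LU}-\bm{G}_{LD})}{(S_R-S_L)(S_U-S_D)},$$ where $\bm{F}_{K}=\bm{F}_1(\bm{U}_K)$ and $\bm{G}_K=\bm{F}_2(\bm{U}_K)$ for $K\in\{LD,RD,LU,RU\}$. Then $\bm{U}^\ast=(D^\ast,\bm{m}^\ast,E^\ast)^T\in\mathcal{G}$, i.e. $D^\ast>0$, $E^\ast>0$ and $(E^\ast)^2-(D^\ast)^2-|\bm{m}^\ast|^2>0$.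
   Context: Two-dimensional special relativistic hydrodynamics in units with $c=1$. Primitive variables: rest-mass density $\rho$, velocity $\bm{u}=(u_1,u_2)$, pressure $p$; equation of state $p=(\Gamma-1)\rho e$ with fixed $\Gamma\in(1,2]$; $h=1+e+p/\rho$; $\gamma=(1-|\bm{u}|^2)^{-1/2}$. Conservative variables $\bm{U}=(D,\bm{m},E)^T$ with $D=\rho\gamma$, $\bm{m}=\rho h\gamma^2\bm{u}$, $E=\rho h\gamma^2-p$. Fluxes $\bm{F}_\ell(\bm{U})=(Du_\ell,\ \bm{m}u_\ell+p\bm{e}_\ell,\ (E+p)u_\ell)^T$, $\ell=1,2$ ($\bm{e}_\ell$ the $\ell$-th unit vector of $\mathbb{R}^2$). Admissible set $\mathcal{G}=\{\bm{U}: D>0,\ E-\sqrt{D^2+|\bm{m}|^2}>0\}$ (equivalently $\rho>0,p>0,|\bm{u}|<1$; on $\mathcal{G}$ primitive variables and fluxes are well defined). With $c_s=\sqrt{\Gamma p/(\rho h)}$, $\lambda_\ell^{(1)}(\bm{U})$ and $\lambda_\ell^{(4)}(\bm{U})$ denote $\dfrac{u_\ell(1-c_s^2)\mp c_s\gamma^{-1}\sqrt{1-u_\ell^2-c_s^2(|\bm{u}|^2-u_\ell^2)}}{1-c_s^2|\bm{u}|^2}$ (minus sign for $(1)$, plus sign for $(4)$), the smallest and largest eigenvalues of $\partial\bm{F}_\ell/\partial\bm{U}$. The four states are the initial data of a 2D Riemann problem in the four quadrants (RU: first, LU: second, LD: third, RD: fourth), and $\bm{U}^\ast$ is the intermediate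 state of the multidimensional HLL Riemann solver. *)

theory Defs
  imports "HOL-Analysis.Analysis"
begin

text \<open>Primitive state (rho, u1, u2, p), adiabatic index gam of 2D special relativistic hydrodynamics (c = 1),
  ideal-gas EOS p = (gam - 1) rho e.\<close>
type_synonym prim = "real \<times> real \<times> real \<times> real"

definition prim_admissible :: "prim \<Rightarrow> bool" where
  "prim_admissible w = (case w of (rho, u1, u2, p) \<Rightarrow> rho > 0 \<and> p > 0 \<and> u1\<^sup>2 + u2\<^sup>2 < 1)"

definition lorentz :: "real \<Rightarrow> real \<Rightarrow> real" where
  "lorentz u1 u2 = 1 / sqrt (1 - (u1\<^sup>2 + u2\<^sup>2))"

definition internal_energy :: "real \<Rightarrow> real \<Rightarrow> real \<Rightarrow> real" where
  "internal_energy gam rho p = p / ((gam - 1) * rho)"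

definition enthalpy :: "real \<Rightarrow> real \<Rightarrow> real \<Rightarrow> real" where
  "enthalpy gam rho p = 1 + internal_energy gam rho p + p / rho"

text \<open>Conservative variables U = (D, m1, m2, E).\<close>
definition cons :: "real \<Rightarrow> prim \<Rightarrow> real^4" where
  "cons gam w = (case w of (rho, u1, u2, p) \<Rightarrow>
     (let g = lorentz u1 u2; h = enthalpy gam rho p in
      vector [rho * g, rho * h * g\<^sup>2 * u1, rho * h * g\<^sup>2 * u2, rho * h * g\<^sup>2 - p]))"

definition flux :: "real \<Rightarrow> nat \<Rightarrow> prim \<Rightarrow> real^4" where
  "flux gam l w = (case w of (rho, u1, u2, p) \<Rightarrow>
     (let U = cons gam w; ul = (if l = 1 then u1 else u2) in
      vector [U$1 * ul,
              U$2 * ul + (if l = 1 then p else 0),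
              U$3 * ul + (if l = 1 then 0 else p),
              (U$4 + p) * ul]))"

definition adm_set :: "(real^4) set" where
  "adm_set = {U. U$1 > 0 \<and> U$4 - sqrt ((U$1)\<^sup>2 + (U$2)\<^sup>2 + (U$3)\<^sup>2) > 0}"

definition sound_speed :: "real \<Rightarrow> prim \<Rightarrow> real" where
  "sound_speed gam w = (case w of (rho, u1, u2, p) \<Rightarrow>
     sqrt (gam * p / (rho * enthalpy gam rho p)))"

text \<open>Smallest (lam_min = lambda^(1)) and largest (lam_max = lambda^(4)) eigenvalue of dF_l/dU.\<close>
definition lam_min :: "real \<Rightarrow> nat \<Rightarrow> prim \<Rightarrow> real" where
  "lam_min gam l w = (case w of (rho, u1, u2, p) \<Rightarrow>
     (let cs = sound_speed gam w; ul = (if l = 1 then u1 else u2);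
          q = u1\<^sup>2 + u2\<^sup>2; g = lorentz u1 u2 in
      (ul * (1 - cs\<^sup>2) - cs / g * sqrt (1 - ul\<^sup>2 - cs\<^sup>2 * (q - ul\<^sup>2))) / (1 - cs\<^sup>2 * q)))"

definition lam_max :: "real \<Rightarrow> nat \<Rightarrow> prim \<Rightarrow> real" where
  "lam_max gam l w = (case w of (rho, u1, u2, p) \<Rightarrow>
     (let cs = sound_speed gam w; ul = (if l = 1 then u1 else u2);
          q = u1\<^sup>2 + u2\<^sup>2; g = lorentz u1 u2 in
      (ul * (1 - cs\<^sup>2) + cs / g * sqrt (1 - ul\<^sup>2 - cs\<^sup>2 * (q - ul\<^sup>2))) / (1 - cs\<^sup>2 * q)))"

end

theory Submission
  imports Defs
begin


lemma vector_4:
 "(vector [x,y,z,w] ::real^4)$1 = x"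
 "(vector [x,y,z,w] ::real^4)$2 = y"
 "(vector [x,y,z,w] ::real^4)$3 = z"
 "(vector [x,y,z,w] ::real^4)$4 = w"
  unfolding vector_def by simp_all

lemma prod_lt1:
  fixes a b :: real
  assumes "\<bar>a\<bar> < 1" "\<bar>b\<bar> < 1"
  shows "a * b < 1"
proof -
  have "\<bar>a\<bar> * \<bar>b\<bar> \<le> 1 * \<bar>b\<bar>" using assms by (intro mult_right_mono) auto
  then have "\<bar>a * b\<bar> < 1" using assms by (simp add: abs_mult)
  then show ?thesis by (simp add: abs_less_iff)
qed

lemma core_alg:
  fixes rho p u v g H c2 lam s :: real
  assumes rho: "rho > 0" and p: "p > 0" and q: "u\<^sup>2 + v\<^sup>2 < 1"
    and g: "g > 0" and gq: "g\<^sup>2 * (1 - (u\<^sup>2 + v\<^sup>2)) = 1"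
    and Hp: "H > p" and B: "H\<^sup>2 - 2*H*p - rho\<^sup>2 > 0"
    and c2: "c2 > 0" "c2 < 1" and cB: "c2 * (H\<^sup>2 - 2*H*p - rho\<^sup>2) > p\<^sup>2 * (1 - c2)"
    and lu: "lam > u" and leq: "(lam - u)\<^sup>2 * (1 - c2) = c2 * (1 - (u\<^sup>2 + v\<^sup>2)) * (1 - lam\<^sup>2)"
    and s: "s \<ge> lam"
  shows "rho * g * (s - u) > 0 \<and> (H*g\<^sup>2 - p) * (s - u) - p * u > 0 \<and>
     ((H*g\<^sup>2 - p) * (s - u) - p * u)\<^sup>2 > (rho * g * (s - u))\<^sup>2 + (H*g\<^sup>2*u*(s-u) - p)\<^sup>2 + (H*g\<^sup>2 * v * (s-u))\<^sup>2"
proof -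
  define t where "t = s - u"
  define M where "M = H * g\<^sup>2"
  define A where "A = g\<^sup>2 * (H\<^sup>2 - 2*H*p - rho\<^sup>2) + p\<^sup>2"
  have t: "t > 0" using lu s t_def by simp
  have u1: "u\<^sup>2 < 1" using q zero_le_power2[of v] by linarith
  have g1: "g\<^sup>2 \<ge> 1"
  proof -
    have "g\<^sup>2 * (1 - (u\<^sup>2 + v\<^sup>2)) \<le> g\<^sup>2 * 1"
      by (rule mult_left_mono) simp_all
    then show ?thesis using gq by simp
  qed
  have Mp: "M > p"
  proof -
    have "H * 1 \<le> H * g\<^sup>2" using g1 Hp p by (intro mult_left_mono) auto
    then show ?thesis unfolding M_def using Hp by simp
  qed
  have Aq: "\<And>x. ((M - p) * x - p * u)\<^sup>2 - (rho * g * x)\<^sup>2 - (M*u*x - p)\<^sup>2 - (M * v * x)\<^sup>2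
            = A * x\<^sup>2 + 2 * p\<^sup>2 * u * x - p\<^sup>2 * (1 - u\<^sup>2)"
  proof -
    fix x
    have "((M - p) * x - p * u)\<^sup>2 - (rho * g * x)\<^sup>2 - (M*u*x - p)\<^sup>2 - (M * v * x)\<^sup>2
       = x\<^sup>2 * (H\<^sup>2 * g\<^sup>2 * (g\<^sup>2 * (1 - (u\<^sup>2 + v\<^sup>2))) - 2*H*g\<^sup>2*p + p\<^sup>2 - rho\<^sup>2*g\<^sup>2) + 2 * p\<^sup>2 * u * x - p\<^sup>2 * (1 - u\<^sup>2)"
      unfolding M_def by (simp add: power2_eq_square algebra_simps)
    also have "\<dots> = A * x\<^sup>2 + 2 * p\<^sup>2 * u * x - p\<^sup>2 * (1 - u\<^sup>2)"
      unfolding gq A_def by (simp add: power2_eq_square algebra_simps)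
    finally show "?thesis x" .
  qed
  have Apos: "A > 0"
  proof -
    have "g\<^sup>2 * (H\<^sup>2 - 2*H*p - rho\<^sup>2) > 0" using B g by simp
    then show ?thesis unfolding A_def using zero_le_power2[of p] by linarith
  qed
  have ul: "\<bar>u\<bar> < 1" using u1 by (simp add: abs_square_less_1)
  have key: "g\<^sup>2 * t\<^sup>2 * (H\<^sup>2 - 2*H*p - rho\<^sup>2) > p\<^sup>2 * (1 - s\<^sup>2)"
  proof (cases "s \<ge> 1")
    case True
    then have "1 \<le> s\<^sup>2" by (simp add: one_le_power)
    then have "p\<^sup>2 * (1 - s\<^sup>2) \<le> 0"
      by (intro mult_nonneg_nonpos) auto
    moreover have "g\<^sup>2 * t\<^sup>2 * (H\<^sup>2 - 2*H*p - rho\<^sup>2) > 0" using g t B by simp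
    ultimately show ?thesis by linarith
  next
    case False
    have l1: "lam < 1" using False s by simp
    have lm: "lam > -1" using lu ul by (simp add: abs_less_iff)
    have sm: "s > -1" using lm s by simp
    have f1: "(s - u) * (1 - u * lam) + (lam - u) * (1 - u * s) \<ge> 0"
    proof -
      have "1 - u * lam > 0" using prod_lt1[of u lam] ul l1 lm by (simp add: abs_less_iff)
      moreover have "1 - u * s > 0" using prod_lt1[of u s] ul False sm by (simp add: abs_less_iff)
      ultimately show ?thesis using lu s by (intro add_nonneg_nonneg mult_nonneg_nonneg) auto
    qed
    have mono: "(s - u)\<^sup>2 * (1 - lam\<^sup>2) \<ge> (lam - u)\<^sup>2 * (1 - s\<^sup>2)"
    proof -
      have "(s - u)\<^sup>2 * (1 - lam\<^sup>2) - (lam - u)\<^sup>2 * (1 - s\<^sup>2)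
          = (s - lam) * ((s - u) * (1 - u * lam) + (lam - u) * (1 - u * s))"
        by (simp add: power2_eq_square algebra_simps)
      also have "\<dots> \<ge> 0" using f1 s by simp
      finally show ?thesis by simp
    qed
    have lpos: "1 - lam\<^sup>2 > 0" using l1 lm by (simp add: abs_square_less_1 abs_less_iff)
    have spos: "1 - s\<^sup>2 > 0" using False sm by (simp add: abs_square_less_1 abs_less_iff)
    have st: "(s - u)\<^sup>2 * (1 - c2) \<ge> c2 * (1 - (u\<^sup>2 + v\<^sup>2)) * (1 - s\<^sup>2)"
    proof -
      have "((s - u)\<^sup>2 * (1 - lam\<^sup>2)) * (1 - c2) \<ge> ((lam - u)\<^sup>2 * (1 - s\<^sup>2)) * (1 - c2)"
        using mono c2 by (intro mult_right_mono) auto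
      then have "(s - u)\<^sup>2 * (1 - c2) * (1 - lam\<^sup>2) \<ge> (lam - u)\<^sup>2 * (1 - c2) * (1 - s\<^sup>2)"
        by (simp add: ac_simps)
      also have "(lam - u)\<^sup>2 * (1 - c2) * (1 - s\<^sup>2) = (c2 * (1 - (u\<^sup>2 + v\<^sup>2)) * (1 - s\<^sup>2)) * (1 - lam\<^sup>2)"
        unfolding leq by (simp add: ac_simps)
      finally show ?thesis using lpos by (simp add: mult_le_cancel_right)
    qed
    define B where "B = H\<^sup>2 - 2*H*p - rho\<^sup>2"
    have "((s - u)\<^sup>2 * (1 - c2)) * (g\<^sup>2 * B * c2) \<ge> (c2 * (1 - (u\<^sup>2 + v\<^sup>2)) * (1 - s\<^sup>2)) * (g\<^sup>2 * B * c2)"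
      using st B c2 unfolding B_def by (intro mult_right_mono) auto
    then have X: "g\<^sup>2 * c2 * (1 - (u\<^sup>2 + v\<^sup>2)) * (1 - s\<^sup>2) * B * c2 \<le> g\<^sup>2 * t\<^sup>2 * B * (1 - c2) * c2"
      unfolding t_def by (simp add: ac_simps)
    have Y: "g\<^sup>2 * c2 * (1 - (u\<^sup>2 + v\<^sup>2)) * (1 - s\<^sup>2) * B * c2 = (1 - s\<^sup>2) * c2 * (c2 * B)"
    proof -
      have "g\<^sup>2 * c2 * (1 - (u\<^sup>2 + v\<^sup>2)) * (1 - s\<^sup>2) * B * c2 = (g\<^sup>2 * (1 - (u\<^sup>2 + v\<^sup>2))) * ((1 - s\<^sup>2) * c2 * (c2 * B))"
        by (simp add: ac_simps)
      then show ?thesis unfolding gq by simp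
    qed
    have Z: "(1 - s\<^sup>2) * c2 * (c2 * B) > (1 - s\<^sup>2) * c2 * (p\<^sup>2 * (1 - c2))"
      using cB spos c2 unfolding B_def by simp
    have "g\<^sup>2 * t\<^sup>2 * B * ((1 - c2) * c2) > p\<^sup>2 * (1 - s\<^sup>2) * ((1 - c2) * c2)"
    proof -
      have "g\<^sup>2 * t\<^sup>2 * B * ((1 - c2) * c2) = g\<^sup>2 * t\<^sup>2 * B * (1 - c2) * c2" by (simp add: ac_simps)
      moreover have "p\<^sup>2 * (1 - s\<^sup>2) * ((1 - c2) * c2) = (1 - s\<^sup>2) * c2 * (p\<^sup>2 * (1 - c2))" by (simp add: ac_simps)
      ultimately show ?thesis using X Y Z by linarith
    qed
    then show ?thesis unfolding B_def using c2 by (simp add: mult_less_cancel_right)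
  qed
  have Qt: "A * t\<^sup>2 + 2 * p\<^sup>2 * u * t - p\<^sup>2 * (1 - u\<^sup>2) > 0"
  proof -
    have "A * t\<^sup>2 + 2 * p\<^sup>2 * u * t - p\<^sup>2 * (1 - u\<^sup>2) = g\<^sup>2 * t\<^sup>2 * (H\<^sup>2 - 2*H*p - rho\<^sup>2) - p\<^sup>2 * (1 - s\<^sup>2)"
      unfolding A_def t_def by (simp add: power2_eq_square algebra_simps)
    then show ?thesis using key by simp
  qed
  have Xpos: "(M - p) * t - p * u > 0"
  proof (rule ccontr)
    assume "\<not> ?thesis"
    then have le: "(M - p) * t \<le> p * u" by simp
    have upos: "u > 0"
    proof (rule ccontr)
      assume "\<not> u > 0"
      then have "p * u \<le> 0" using p by (simp add: mult_nonneg_nonpos)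
      moreover have "(M - p) * t > 0" using Mp t by simp
      ultimately show False using le by linarith
    qed
    define t0 where "t0 = p * u / (M - p)"
    have t0: "t0 > 0" unfolding t0_def using upos p Mp by simp
    have tt0: "t \<le> t0" unfolding t0_def using le Mp by (simp add: field_simps)
    have X0: "(M - p) * t0 - p * u = 0" unfolding t0_def using Mp by simp
    have Q0: "A * t0\<^sup>2 + 2 * p\<^sup>2 * u * t0 - p\<^sup>2 * (1 - u\<^sup>2) < 0"
    proof -
      have "A * t0\<^sup>2 + 2 * p\<^sup>2 * u * t0 - p\<^sup>2 * (1 - u\<^sup>2) = - ((rho * g * t0)\<^sup>2 + (M*u*t0 - p)\<^sup>2 + (M * v * t0)\<^sup>2)"
        using Aq[of t0] X0 by simp
      moreover have "(rho * g * t0)\<^sup>2 > 0" using rho g t0 by simp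
      ultimately show ?thesis
        using zero_le_power2[of "M*u*t0 - p"] zero_le_power2[of "M * v * t0"] by linarith
    qed
    define l where "l = t / t0"
    have l: "0 < l" "l \<le> 1" using t t0 tt0 unfolding l_def by auto
    have tl: "t = l * t0" unfolding l_def using t0 by simp
    have "A * t\<^sup>2 \<le> l * (A * t0\<^sup>2)"
    proof -
      have "l\<^sup>2 \<le> l" using l by (simp add: power2_eq_square mult_le_cancel_left1)
      then have "l\<^sup>2 * (A * t0\<^sup>2) \<le> l * (A * t0\<^sup>2)" using Apos by (simp add: mult_right_mono)
      then show ?thesis unfolding tl by (simp add: power_mult_distrib algebra_simps)
    qed
    then have "A * t\<^sup>2 + 2 * p\<^sup>2 * u * t - p\<^sup>2 * (1 - u\<^sup>2)
       \<le> l * (A * t0\<^sup>2 + 2 * p\<^sup>2 * u * t0 - p\<^sup>2 * (1 - u\<^sup>2)) - (1 - l) * (p\<^sup>2 * (1 - u\<^sup>2))"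
      unfolding tl by (simp add: algebra_simps)
    also have "\<dots> < 0"
    proof -
      have "l * (A * t0\<^sup>2 + 2 * p\<^sup>2 * u * t0 - p\<^sup>2 * (1 - u\<^sup>2)) < 0" using Q0 l by (simp add: mult_pos_neg)
      moreover have "(1 - l) * (p\<^sup>2 * (1 - u\<^sup>2)) \<ge> 0" using l u1 by simp
      ultimately show ?thesis by simp
    qed
    finally show False using Qt by simp
  qed
  show ?thesis
    using Aq[of t] Qt Xpos t rho g unfolding t_def M_def by simp
qed



lemma lam_props:
  fixes u v c :: real
  assumes q: "u\<^sup>2 + v\<^sup>2 < 1" and c: "0 < c" "c\<^sup>2 < 1"
  defines "lam \<equiv> (u * (1 - c\<^sup>2) + c / (1 / sqrt (1 - (u\<^sup>2 + v\<^sup>2))) * sqrt (1 - u\<^sup>2 - c\<^sup>2 * ((u\<^sup>2 + v\<^sup>2) - u\<^sup>2))) / (1 - c\<^sup>2 * (u\<^sup>2 + v\<^sup>2))"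
  shows "lam > u \<and> (lam - u)\<^sup>2 * (1 - c\<^sup>2) = c\<^sup>2 * (1 - (u\<^sup>2 + v\<^sup>2)) * (1 - lam\<^sup>2)"
proof -
  define Q where "Q = u\<^sup>2 + v\<^sup>2"
  define K where "K = 1 - c\<^sup>2 * Q"
  define W where "W = 1 - u\<^sup>2 - c\<^sup>2 * (Q - u\<^sup>2)"
  define sq where "sq = sqrt (1 - Q)"
  define w where "w = sqrt W"
  define Z where "Z = c * sq * w"
  have Q1: "Q < 1" using q Q_def by simp
  have Q0: "Q \<ge> 0" unfolding Q_def by simp
  have cQ: "c\<^sup>2 * Q < 1"
  proof -
    have "c\<^sup>2 * Q \<le> 1 * Q" using c Q0 by (intro mult_right_mono) auto
    then show ?thesis using Q1 by simp
  qed
  have K: "K > 0" unfolding K_def using cQ by simp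
  have W: "W > 0"
  proof -
    have "c\<^sup>2 * v\<^sup>2 \<le> 1 * v\<^sup>2" using c by (intro mult_right_mono) auto
    then show ?thesis unfolding W_def Q_def using q by simp
  qed
  have sq: "sq > 0" "sq\<^sup>2 = 1 - Q" unfolding sq_def using Q1 by auto
  have w: "w > 0" "w\<^sup>2 = W" unfolding w_def using W by auto
  have lamK: "lam * K = u * (1 - c\<^sup>2) + Z"
    unfolding lam_def K_def Z_def sq_def w_def W_def Q_def using K unfolding K_def Q_def by simp
  have Z2: "Z\<^sup>2 = c\<^sup>2 * (1 - Q) * W"
    unfolding Z_def using sq w by (simp add: power_mult_distrib)
  have wgt: "w > u * c * sq"
  proof (cases "u \<le> 0")
    case True
    then have "u * c * sq \<le> 0" using c sq by (simp add: mult_nonpos_nonneg)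
    then show ?thesis using w by linarith
  next
    case False
    have "(u * c * sq)\<^sup>2 = u\<^sup>2 * c\<^sup>2 * (1 - Q)" using sq(2) by (simp add: power_mult_distrib)
    then have "W - (u * c * sq)\<^sup>2 = (1 - u\<^sup>2) * K"
      unfolding W_def K_def Q_def
      by (simp add: power2_eq_square algebra_simps)
    moreover have "(1 - u\<^sup>2) * K > 0"
    proof -
      have "1 - u\<^sup>2 > 0" using Q1 zero_le_power2[of v] unfolding Q_def by linarith
      then show ?thesis using K by simp
    qed
    ultimately have "(u * c * sq)\<^sup>2 < w\<^sup>2" using w by simp
    then show ?thesis using w(1) power_less_imp_less_base[of "u * c * sq" 2 w] by simp
  qed
  have "(lam - u) * K = c * sq * (w - u * c * sq)"
  proof -
    have "(lam - u) * K = u * (1 - c\<^sup>2) + Z - u * K" using lamK by (simp add: algebra_simps)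
    also have "\<dots> = c * sq * (w - u * c * sq)"
      using sq(2) unfolding Z_def K_def by algebra
    finally show ?thesis .
  qed
  moreover have "c * sq * (w - u * c * sq) > 0" using c sq wgt by simp
  ultimately have lu: "lam > u" using K by (smt (verit) mult_nonpos_nonneg)
  have "K\<^sup>2 * ((lam - u)\<^sup>2 * (1 - c\<^sup>2) - c\<^sup>2 * (1 - Q) * (1 - lam\<^sup>2)) = 0"
    using lamK Z2 unfolding K_def W_def by algebra
  then have "(lam - u)\<^sup>2 * (1 - c\<^sup>2) = c\<^sup>2 * (1 - Q) * (1 - lam\<^sup>2)" using K by simp
  then show ?thesis using lu Q_def by simp
qed



definition conep :: "real^4 \<Rightarrow> bool" where
  "conep V \<longleftrightarrow> V$1 > 0 \<and> V$4 > 0 \<and> (V$4)\<^sup>2 > (V$1)\<^sup>2 + (V$2)\<^sup>2 + (V$3)\<^sup>2"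

lemma phys_alg:
  fixes rho k y H c2 :: real
  assumes rho: "rho > 0" and k: "0 < k" "k \<le> 1" and y: "y > 0"
    and H: "H = rho + y + k * y" and c2: "c2 = (1 + k) * (k * y) / H"
  shows "H > k * y \<and> H\<^sup>2 - 2 * H * (k * y) - rho\<^sup>2 > 0 \<and> 0 < c2 \<and> c2 < 1
     \<and> c2 * (H\<^sup>2 - 2 * H * (k * y) - rho\<^sup>2) > (k * y)\<^sup>2 * (1 - c2)"
proof -
  have Hp: "H > 0" using H rho k y by (simp add: add_pos_pos)
  have ky: "k * y > 0" using k y by simp
  have kyy: "k * y \<le> y" using k y by simp
  have a: "H > k * y" using H rho kyy y by simp
  have "H\<^sup>2 - 2 * H * (k * y) - rho\<^sup>2 = 2 * rho * y + y * (y - k * (k * y))"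
    unfolding H by (simp add: power2_eq_square algebra_simps)
  moreover have kk: "k * (k * y) \<le> y"
  proof -
    have "k * (k * y) \<le> 1 * (k * y)" using k ky by (intro mult_right_mono) auto
    then show ?thesis using kyy by simp
  qed
  moreover have "2 * rho * y > 0" using rho y by simp
  moreover have "y * (y - k * (k * y)) \<ge> 0" using y kk by simp
  ultimately have b: "H\<^sup>2 - 2 * H * (k * y) - rho\<^sup>2 > 0" by linarith
  have c0: "c2 > 0" unfolding c2 using k y Hp by simp
  have c1: "c2 < 1"
  proof -
    have "(1 + k) * (k * y) = k * y + k * (k * y)" by (simp add: algebra_simps)
    also have "\<dots> < H" unfolding H using kk rho kyy by linarith
    finally show ?thesis unfolding c2 using Hp by simp
  qed
  have cH: "c2 * H = (1 + k) * (k * y)" unfolding c2 using Hp by simp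
  have "H * (c2 * (H\<^sup>2 - 2 * H * (k * y) - rho\<^sup>2) - (k * y)\<^sup>2 * (1 - c2))
      = (c2 * H) * (H\<^sup>2 - 2 * H * (k * y) - rho\<^sup>2) - (k * y)\<^sup>2 * (H - c2 * H)"
    by (simp add: algebra_simps)
  also have "\<dots> = (1 + k) * (k * y) * (H\<^sup>2 - 2 * H * (k * y) - rho\<^sup>2) - (k * y)\<^sup>2 * (H - (1 + k) * (k * y))"
    unfolding cH ..
  also have "\<dots> = k * y * y * ((2 + k) * rho + (1 - k * k) * y)"
    unfolding H by (simp add: power2_eq_square algebra_simps)
  finally have "H * (c2 * (H\<^sup>2 - 2 * H * (k * y) - rho\<^sup>2) - (k * y)\<^sup>2 * (1 - c2)) = k * y * y * ((2 + k) * rho + (1 - k * k) * y)" .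
  moreover have "k * y * y * ((2 + k) * rho + (1 - k * k) * y) > 0"
  proof -
    have "k * k \<le> 1" using k by (simp add: mult_le_one)
    then have "(2 + k) * rho + (1 - k * k) * y > 0" using k rho y
      by (intro add_pos_nonneg mult_pos_pos mult_nonneg_nonneg) auto
    then show ?thesis using k y by simp
  qed
  ultimately have "c2 * (H\<^sup>2 - 2 * H * (k * y) - rho\<^sup>2) - (k * y)\<^sup>2 * (1 - c2) > 0"
    using Hp by (metis zero_less_mult_pos)
  then show ?thesis using a b c0 c1 by simp
qed

lemma bridge:
  fixes gam rho u1 u2 p a b s :: real
  assumes adm: "prim_admissible (rho, u1, u2, p)" and gam: "1 < gam" "gam \<le> 2"
    and ab: "a\<^sup>2 + b\<^sup>2 = u1\<^sup>2 + u2\<^sup>2"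
    and s: "s \<ge> (a * (1 - (sound_speed gam (rho, u1, u2, p))\<^sup>2) + sound_speed gam (rho, u1, u2, p) / lorentz u1 u2
              * sqrt (1 - a\<^sup>2 - (sound_speed gam (rho, u1, u2, p))\<^sup>2 * ((u1\<^sup>2 + u2\<^sup>2) - a\<^sup>2)))
              / (1 - (sound_speed gam (rho, u1, u2, p))\<^sup>2 * (u1\<^sup>2 + u2\<^sup>2))"
  defines "g \<equiv> lorentz u1 u2" and "M \<equiv> rho * enthalpy gam rho p * (lorentz u1 u2)\<^sup>2"
  shows "rho * g * (s - a) > 0 \<and> (M - p) * (s - a) - p * a > 0 \<and>
     ((M - p) * (s - a) - p * a)\<^sup>2 > (rho * g * (s - a))\<^sup>2 + (M * a * (s - a) - p)\<^sup>2 + (M * b * (s - a))\<^sup>2"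
proof -
  have rho: "rho > 0" and p: "p > 0" and q: "u1\<^sup>2 + u2\<^sup>2 < 1"
    using adm unfolding prim_admissible_def by auto
  define k where "k = gam - 1"
  define y where "y = p / k"
  define H where "H = rho * enthalpy gam rho p"
  define c where "c = sound_speed gam (rho, u1, u2, p)"
  have k: "0 < k" "k \<le> 1" using gam k_def by auto
  have y: "y > 0" unfolding y_def using p k by simp
  have pky: "p = k * y" unfolding y_def using k by simp
  have kne: "gam - 1 \<noteq> 0" using gam by simp
  have "H = rho + p / k + p"
    unfolding H_def enthalpy_def internal_energy_def k_def using rho kne
    by (simp add: field_simps)
  then have "H = rho + y + p" unfolding y_def[symmetric] .
  then have H: "H = rho + y + k * y" using pky by simp
  have Hpos: "H > 0" using H rho y k by (simp add: add_pos_pos)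
  have c2: "c\<^sup>2 = (1 + k) * (k * y) / H"
  proof -
    have "gam * p / H \<ge> 0" using Hpos p gam by simp
    then have "c\<^sup>2 = gam * p / H" unfolding c_def sound_speed_def H_def by simp
    moreover have "(1 + k) * (k * y) = gam * p" by (simp add: k_def pky)
    ultimately show ?thesis by simp
  qed
  from phys_alg[OF rho k y H c2]
  have P: "H > p" "H\<^sup>2 - 2 * H * p - rho\<^sup>2 > 0" "0 < c\<^sup>2" "c\<^sup>2 < 1"
     "c\<^sup>2 * (H\<^sup>2 - 2 * H * p - rho\<^sup>2) > p\<^sup>2 * (1 - c\<^sup>2)" unfolding pky by auto
  have "c = sqrt (gam * p / H)" unfolding c_def sound_speed_def H_def by simp
  moreover have "gam * p / H \<ge> 0" using Hpos p gam by simp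
  ultimately have "c \<ge> 0" by simp
  then have c0: "c > 0" using P(3) by (cases "c = 0") auto
  have q': "a\<^sup>2 + b\<^sup>2 < 1" using ab q by simp
  have gdef: "g = 1 / sqrt (1 - (a\<^sup>2 + b\<^sup>2))" unfolding g_def lorentz_def ab ..
  have g0: "g > 0" unfolding gdef using q' by simp
  have gq: "g\<^sup>2 * (1 - (a\<^sup>2 + b\<^sup>2)) = 1" unfolding gdef using q' by (simp add: power_divide)
  define lam where "lam = (a * (1 - c\<^sup>2) + c / (1 / sqrt (1 - (a\<^sup>2 + b\<^sup>2))) * sqrt (1 - a\<^sup>2 - c\<^sup>2 * ((a\<^sup>2 + b\<^sup>2) - a\<^sup>2))) / (1 - c\<^sup>2 * (a\<^sup>2 + b\<^sup>2))"
  have L: "lam > a \<and> (lam - a)\<^sup>2 * (1 - c\<^sup>2) = c\<^sup>2 * (1 - (a\<^sup>2 + b\<^sup>2)) * (1 - lam\<^sup>2)"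
    unfolding lam_def by (rule lam_props[OF q' c0 P(4)])
  have sl: "s \<ge> lam" using s unfolding lam_def c_def[symmetric] g_def[symmetric] gdef ab .
  have Mg: "M = H * g\<^sup>2" unfolding M_def H_def g_def ..
  have "p < H" "0 < H\<^sup>2 - 2 * H * p - rho\<^sup>2" using P by auto
  show ?thesis unfolding Mg
    by (rule core_alg[OF rho p q' g0 gq P(1) P(2) P(3) P(4) P(5) conjunct1[OF L] conjunct2[OF L] sl])
qed



lemma conep_scale: "conep V \<Longrightarrow> k > 0 \<Longrightarrow> conep (k *\<^sub>R V)"
  unfolding conep_def by (simp add: power_mult_distrib distrib_left[symmetric])

lemma conep_add:
  assumes "conep V" "conep W" shows "conep (V + W)"
proof -
  have V: "V$1 > 0" "V$4 > 0" "(V$4)\<^sup>2 > (V$1)\<^sup>2 + (V$2)\<^sup>2 + (V$3)\<^sup>2" using assms(1) unfolding conep_def by auto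
  have W: "W$1 > 0" "W$4 > 0" "(W$4)\<^sup>2 > (W$1)\<^sup>2 + (W$2)\<^sup>2 + (W$3)\<^sup>2" using assms(2) unfolding conep_def by auto
  define d where "d = V$1 * W$1 + V$2 * W$2 + V$3 * W$3"
  have cs: "((V$1)\<^sup>2 + (V$2)\<^sup>2 + (V$3)\<^sup>2) * ((W$1)\<^sup>2 + (W$2)\<^sup>2 + (W$3)\<^sup>2) - d\<^sup>2
     = (V$1 * W$2 - V$2 * W$1)\<^sup>2 + (V$1 * W$3 - V$3 * W$1)\<^sup>2 + (V$2 * W$3 - V$3 * W$2)\<^sup>2"
    unfolding d_def by (simp add: power2_eq_square algebra_simps)
  have "d\<^sup>2 \<le> ((V$1)\<^sup>2 + (V$2)\<^sup>2 + (V$3)\<^sup>2) * ((W$1)\<^sup>2 + (W$2)\<^sup>2 + (W$3)\<^sup>2)"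
    using cs zero_le_power2[of "V$1 * W$2 - V$2 * W$1"] zero_le_power2[of "V$1 * W$3 - V$3 * W$1"]
      zero_le_power2[of "V$2 * W$3 - V$3 * W$2"] by linarith
  also have "\<dots> \<le> (V$4)\<^sup>2 * (W$4)\<^sup>2"
    using V W by (intro mult_mono) auto
  finally have "d\<^sup>2 \<le> (V$4 * W$4)\<^sup>2" by (simp add: power_mult_distrib)
  then have "\<bar>d\<bar>\<^sup>2 \<le> (V$4 * W$4)\<^sup>2" by simp
  moreover have "0 \<le> V$4 * W$4" using V W by simp
  ultimately have "\<bar>d\<bar> \<le> V$4 * W$4" by (rule power2_le_imp_le)
  then have dle: "d \<le> V$4 * W$4" by simp
  have "(V$4 + W$4)\<^sup>2 = (V$4)\<^sup>2 + (W$4)\<^sup>2 + 2 * (V$4 * W$4)" by (simp add: power2_eq_square algebra_simps)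
  moreover have "(V$1 + W$1)\<^sup>2 + (V$2 + W$2)\<^sup>2 + (V$3 + W$3)\<^sup>2
     = ((V$1)\<^sup>2 + (V$2)\<^sup>2 + (V$3)\<^sup>2) + ((W$1)\<^sup>2 + (W$2)\<^sup>2 + (W$3)\<^sup>2) + 2 * d"
    unfolding d_def by (simp add: power2_eq_square algebra_simps)
  ultimately have "(V$4 + W$4)\<^sup>2 > (V$1 + W$1)\<^sup>2 + (V$2 + W$2)\<^sup>2 + (V$3 + W$3)\<^sup>2"
    using V(3) W(3) dle by linarith
  then show ?thesis unfolding conep_def using V W by simp
qed

lemma conep_adm:
  assumes "conep U"
  shows "U \<in> adm_set \<and> U$1 > 0 \<and> U$4 > 0 \<and> (U$4)\<^sup>2 - (U$1)\<^sup>2 - ((U$2)\<^sup>2 + (U$3)\<^sup>2) > 0"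
proof -
  have U: "U$1 > 0" "U$4 > 0" "(U$4)\<^sup>2 > (U$1)\<^sup>2 + (U$2)\<^sup>2 + (U$3)\<^sup>2" using assms unfolding conep_def by auto
  have "sqrt ((U$1)\<^sup>2 + (U$2)\<^sup>2 + (U$3)\<^sup>2) < sqrt ((U$4)\<^sup>2)" using U(3) by (rule real_sqrt_less_mono)
  also have "\<dots> = U$4" using U(2) by simp
  finally have "U$4 - sqrt ((U$1)\<^sup>2 + (U$2)\<^sup>2 + (U$3)\<^sup>2) > 0" by simp
  then show ?thesis unfolding adm_set_def using U by simp
qed

lemma cons_comp:
  "cons gam (rho, u1, u2, p) $ 1 = rho * lorentz u1 u2"
  "cons gam (rho, u1, u2, p) $ 2 = rho * enthalpy gam rho p * (lorentz u1 u2)\<^sup>2 * u1"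
  "cons gam (rho, u1, u2, p) $ 3 = rho * enthalpy gam rho p * (lorentz u1 u2)\<^sup>2 * u2"
  "cons gam (rho, u1, u2, p) $ 4 = rho * enthalpy gam rho p * (lorentz u1 u2)\<^sup>2 - p"
  by (simp_all add: cons_def Let_def vector_4)

lemma flux1_comp:
  "flux gam 1 w $ 1 = cons gam w $ 1 * fst (snd w)"
  "flux gam 1 w $ 2 = cons gam w $ 2 * fst (snd w) + snd (snd (snd w))"
  "flux gam 1 w $ 3 = cons gam w $ 3 * fst (snd w)"
  "flux gam 1 w $ 4 = (cons gam w $ 4 + snd (snd (snd w))) * fst (snd w)"
  by (cases w; simp add: flux_def Let_def vector_4)+

lemma flux2_comp:
  "flux gam 2 w $ 1 = cons gam w $ 1 * fst (snd (snd w))"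
  "flux gam 2 w $ 2 = cons gam w $ 2 * fst (snd (snd w))"
  "flux gam 2 w $ 3 = cons gam w $ 3 * fst (snd (snd w)) + snd (snd (snd w))"
  "flux gam 2 w $ 4 = (cons gam w $ 4 + snd (snd (snd w))) * fst (snd (snd w))"
  by (cases w; simp add: flux_def Let_def vector_4)+

lemma conep_of:
  fixes V :: "real^4"
  assumes "rho * g * (s - a) > 0 \<and> (M - p) * (s - a) - p * a > 0 \<and>
     ((M - p) * (s - a) - p * a)\<^sup>2 > (rho * g * (s - a))\<^sup>2 + (M * a * (s - a) - p)\<^sup>2 + (M * b * (s - a))\<^sup>2"
    and "V$1 = rho * g * (s - a)" "V$4 = (M - p) * (s - a) - p * a"
    and "(V$2)\<^sup>2 + (V$3)\<^sup>2 = (M * a * (s - a) - p)\<^sup>2 + (M * b * (s - a))\<^sup>2"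
  shows "conep V"
  using assms unfolding conep_def by simp

lemma max1:
  assumes adm: "prim_admissible w" and gam: "1 < gam" "gam \<le> 2" and sl: "s \<ge> lam_max gam 1 w"
  shows "conep (s *\<^sub>R cons gam w - flux gam 1 w)"
proof -
  obtain rho u1 u2 p where w: "w = (rho, u1, u2, p)" by (cases w) auto
  define M where "M = rho * enthalpy gam rho p * (lorentz u1 u2)\<^sup>2"
  have s': "s \<ge> (u1 * (1 - (sound_speed gam (rho, u1, u2, p))\<^sup>2) + sound_speed gam (rho, u1, u2, p) / lorentz u1 u2
              * sqrt (1 - u1\<^sup>2 - (sound_speed gam (rho, u1, u2, p))\<^sup>2 * ((u1\<^sup>2 + u2\<^sup>2) - u1\<^sup>2)))
              / (1 - (sound_speed gam (rho, u1, u2, p))\<^sup>2 * (u1\<^sup>2 + u2\<^sup>2))"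
    using sl unfolding w lam_max_def Let_def by simp
  have adm': "prim_admissible (rho, u1, u2, p)" using adm w by simp
  note br = bridge[OF adm' gam refl s']
  show ?thesis
  proof (rule conep_of[OF br])
    show "(s *\<^sub>R cons gam w - flux gam 1 w) $ 1 = rho * lorentz u1 u2 * (s - u1)"
      unfolding w vector_minus_component vector_scaleR_component flux1_comp fst_conv snd_conv cons_comp by (simp add: algebra_simps)
    show "(s *\<^sub>R cons gam w - flux gam 1 w) $ 4 = (rho * enthalpy gam rho p * (lorentz u1 u2)\<^sup>2 - p) * (s - u1) - p * u1"
      unfolding w vector_minus_component vector_scaleR_component flux1_comp fst_conv snd_conv cons_comp by (simp add: algebra_simps)
    have "(s *\<^sub>R cons gam w - flux gam 1 w) $ 2 = M * u1 * (s - u1) - p"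
      unfolding w M_def vector_minus_component vector_scaleR_component flux1_comp fst_conv snd_conv cons_comp by (simp add: algebra_simps)
    moreover have "(s *\<^sub>R cons gam w - flux gam 1 w) $ 3 = M * u2 * (s - u1)"
      unfolding w M_def vector_minus_component vector_scaleR_component flux1_comp fst_conv snd_conv cons_comp by (simp add: algebra_simps)
    ultimately show "((s *\<^sub>R cons gam w - flux gam 1 w) $ 2)\<^sup>2 + ((s *\<^sub>R cons gam w - flux gam 1 w) $ 3)\<^sup>2 =
      (rho * enthalpy gam rho p * (lorentz u1 u2)\<^sup>2 * u1 * (s - u1) - p)\<^sup>2 + (rho * enthalpy gam rho p * (lorentz u1 u2)\<^sup>2 * u2 * (s - u1))\<^sup>2"
      unfolding M_def by simp
  qed
qed

lemma neg_div: fixes x A X K :: real shows "((- x) * A + X) / K = - ((x * A - X) / K)"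
  by (simp add: diff_divide_distrib add_divide_distrib)

lemma max2:
  assumes adm: "prim_admissible w" and gam: "1 < gam" "gam \<le> 2" and sl: "s \<ge> lam_max gam 2 w"
  shows "conep (s *\<^sub>R cons gam w - flux gam 2 w)"
proof -
  obtain rho u1 u2 p where w: "w = (rho, u1, u2, p)" by (cases w) auto
  define M where "M = rho * enthalpy gam rho p * (lorentz u1 u2)\<^sup>2"
  have s': "s \<ge> (u2 * (1 - (sound_speed gam (rho, u1, u2, p))\<^sup>2) + sound_speed gam (rho, u1, u2, p) / lorentz u1 u2
              * sqrt (1 - u2\<^sup>2 - (sound_speed gam (rho, u1, u2, p))\<^sup>2 * ((u1\<^sup>2 + u2\<^sup>2) - u2\<^sup>2)))
              / (1 - (sound_speed gam (rho, u1, u2, p))\<^sup>2 * (u1\<^sup>2 + u2\<^sup>2))"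
    using sl unfolding w lam_max_def Let_def by simp
  have adm': "prim_admissible (rho, u1, u2, p)" using adm w by simp
  have ab: "u2\<^sup>2 + u1\<^sup>2 = u1\<^sup>2 + u2\<^sup>2" by simp
  note br = bridge[OF adm' gam ab s']
  show ?thesis
  proof (rule conep_of[OF br])
    show "(s *\<^sub>R cons gam w - flux gam 2 w) $ 1 = rho * lorentz u1 u2 * (s - u2)"
      unfolding w vector_minus_component vector_scaleR_component flux2_comp fst_conv snd_conv cons_comp by (simp add: algebra_simps)
    show "(s *\<^sub>R cons gam w - flux gam 2 w) $ 4 = (rho * enthalpy gam rho p * (lorentz u1 u2)\<^sup>2 - p) * (s - u2) - p * u2"
      unfolding w vector_minus_component vector_scaleR_component flux2_comp fst_conv snd_conv cons_comp by (simp add: algebra_simps)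
    have "(s *\<^sub>R cons gam w - flux gam 2 w) $ 3 = M * u2 * (s - u2) - p"
      unfolding w M_def vector_minus_component vector_scaleR_component flux2_comp fst_conv snd_conv cons_comp by (simp add: algebra_simps)
    moreover have "(s *\<^sub>R cons gam w - flux gam 2 w) $ 2 = M * u1 * (s - u2)"
      unfolding w M_def vector_minus_component vector_scaleR_component flux2_comp fst_conv snd_conv cons_comp by (simp add: algebra_simps)
    ultimately show "((s *\<^sub>R cons gam w - flux gam 2 w) $ 2)\<^sup>2 + ((s *\<^sub>R cons gam w - flux gam 2 w) $ 3)\<^sup>2 =
      (rho * enthalpy gam rho p * (lorentz u1 u2)\<^sup>2 * u2 * (s - u2) - p)\<^sup>2 + (rho * enthalpy gam rho p * (lorentz u1 u2)\<^sup>2 * u1 * (s - u2))\<^sup>2"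
      unfolding M_def by simp
  qed
qed

lemma min1:
  assumes adm: "prim_admissible w" and gam: "1 < gam" "gam \<le> 2" and sl: "sg \<le> lam_min gam 1 w"
  shows "conep (flux gam 1 w - sg *\<^sub>R cons gam w)"
proof -
  obtain rho u1 u2 p where w: "w = (rho, u1, u2, p)" by (cases w) auto
  define M where "M = rho * enthalpy gam rho p * (lorentz u1 u2)\<^sup>2"
  define c where "c = sound_speed gam (rho, u1, u2, p)"
  have "sg \<le> (u1 * (1 - c\<^sup>2) - c / lorentz u1 u2
              * sqrt (1 - u1\<^sup>2 - c\<^sup>2 * ((u1\<^sup>2 + u2\<^sup>2) - u1\<^sup>2)))
              / (1 - c\<^sup>2 * (u1\<^sup>2 + u2\<^sup>2))"
    using sl unfolding w lam_min_def Let_def c_def by simp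
  then have s': "- sg \<ge> ((- u1) * (1 - c\<^sup>2) + c / lorentz u1 u2
              * sqrt (1 - (- u1)\<^sup>2 - c\<^sup>2 * ((u1\<^sup>2 + u2\<^sup>2) - (- u1)\<^sup>2)))
              / (1 - c\<^sup>2 * (u1\<^sup>2 + u2\<^sup>2))"
    unfolding neg_div power2_minus by linarith
  have adm': "prim_admissible (rho, u1, u2, p)" using adm w by simp
  have ab: "(- u1)\<^sup>2 + u2\<^sup>2 = u1\<^sup>2 + u2\<^sup>2" by simp
  note br = bridge[OF adm' gam ab s'[unfolded c_def]]
  show ?thesis
  proof (rule conep_of[OF br])
    show "(flux gam 1 w - sg *\<^sub>R cons gam w) $ 1 = rho * lorentz u1 u2 * (- sg - - u1)"
      unfolding w vector_minus_component vector_scaleR_component flux1_comp fst_conv snd_conv cons_comp by (simp add: algebra_simps)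
    show "(flux gam 1 w - sg *\<^sub>R cons gam w) $ 4 = (rho * enthalpy gam rho p * (lorentz u1 u2)\<^sup>2 - p) * (- sg - - u1) - p * - u1"
      unfolding w vector_minus_component vector_scaleR_component flux1_comp fst_conv snd_conv cons_comp by (simp add: algebra_simps)
    have "(flux gam 1 w - sg *\<^sub>R cons gam w) $ 2 = - (M * (- u1) * (- sg - - u1) - p)"
      unfolding w M_def vector_minus_component vector_scaleR_component flux1_comp fst_conv snd_conv cons_comp by (simp add: algebra_simps)
    moreover have "(flux gam 1 w - sg *\<^sub>R cons gam w) $ 3 = M * u2 * (- sg - - u1)"
      unfolding w M_def vector_minus_component vector_scaleR_component flux1_comp fst_conv snd_conv cons_comp by (simp add: algebra_simps)
    ultimately show "((flux gam 1 w - sg *\<^sub>R cons gam w) $ 2)\<^sup>2 + ((flux gam 1 w - sg *\<^sub>R cons gam w) $ 3)\<^sup>2 =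
      (rho * enthalpy gam rho p * (lorentz u1 u2)\<^sup>2 * - u1 * (- sg - - u1) - p)\<^sup>2 + (rho * enthalpy gam rho p * (lorentz u1 u2)\<^sup>2 * u2 * (- sg - - u1))\<^sup>2"
      unfolding M_def by (simp only: power2_minus)
  qed
qed

lemma min2:
  assumes adm: "prim_admissible w" and gam: "1 < gam" "gam \<le> 2" and sl: "sg \<le> lam_min gam 2 w"
  shows "conep (flux gam 2 w - sg *\<^sub>R cons gam w)"
proof -
  obtain rho u1 u2 p where w: "w = (rho, u1, u2, p)" by (cases w) auto
  define M where "M = rho * enthalpy gam rho p * (lorentz u1 u2)\<^sup>2"
  define c where "c = sound_speed gam (rho, u1, u2, p)"
  have "sg \<le> (u2 * (1 - c\<^sup>2) - c / lorentz u1 u2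
              * sqrt (1 - u2\<^sup>2 - c\<^sup>2 * ((u1\<^sup>2 + u2\<^sup>2) - u2\<^sup>2)))
              / (1 - c\<^sup>2 * (u1\<^sup>2 + u2\<^sup>2))"
    using sl unfolding w lam_min_def Let_def c_def by simp
  then have s': "- sg \<ge> ((- u2) * (1 - c\<^sup>2) + c / lorentz u1 u2
              * sqrt (1 - (- u2)\<^sup>2 - c\<^sup>2 * ((u1\<^sup>2 + u2\<^sup>2) - (- u2)\<^sup>2)))
              / (1 - c\<^sup>2 * (u1\<^sup>2 + u2\<^sup>2))"
    unfolding neg_div power2_minus by linarith
  have adm': "prim_admissible (rho, u1, u2, p)" using adm w by simp
  have ab: "(- u2)\<^sup>2 + u1\<^sup>2 = u1\<^sup>2 + u2\<^sup>2" by simp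
  note br = bridge[OF adm' gam ab s'[unfolded c_def]]
  show ?thesis
  proof (rule conep_of[OF br])
    show "(flux gam 2 w - sg *\<^sub>R cons gam w) $ 1 = rho * lorentz u1 u2 * (- sg - - u2)"
      unfolding w vector_minus_component vector_scaleR_component flux2_comp fst_conv snd_conv cons_comp by (simp add: algebra_simps)
    show "(flux gam 2 w - sg *\<^sub>R cons gam w) $ 4 = (rho * enthalpy gam rho p * (lorentz u1 u2)\<^sup>2 - p) * (- sg - - u2) - p * - u2"
      unfolding w vector_minus_component vector_scaleR_component flux2_comp fst_conv snd_conv cons_comp by (simp add: algebra_simps)
    have "(flux gam 2 w - sg *\<^sub>R cons gam w) $ 3 = - (M * (- u2) * (- sg - - u2) - p)"
      unfolding w M_def vector_minus_component vector_scaleR_component flux2_comp fst_conv snd_conv cons_comp by (simp add: algebra_simps)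
    moreover have "(flux gam 2 w - sg *\<^sub>R cons gam w) $ 2 = M * u1 * (- sg - - u2)"
      unfolding w M_def vector_minus_component vector_scaleR_component flux2_comp fst_conv snd_conv cons_comp by (simp add: algebra_simps)
    ultimately show "((flux gam 2 w - sg *\<^sub>R cons gam w) $ 2)\<^sup>2 + ((flux gam 2 w - sg *\<^sub>R cons gam w) $ 3)\<^sup>2 =
      (rho * enthalpy gam rho p * (lorentz u1 u2)\<^sup>2 * - u2 * (- sg - - u2) - p)\<^sup>2 + (rho * enthalpy gam rho p * (lorentz u1 u2)\<^sup>2 * u1 * (- sg - - u2))\<^sup>2"
      unfolding M_def by (simp only: power2_minus add.commute)
  qed
qed


lemma comb:
  fixes URU ULU ULD URD FRU FLU FLD FRD GRU GLU GLD GRD :: "real^4" and SR SL SU SD k :: real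
  shows "k *\<^sub>R ((SR*SU) *\<^sub>R URU + (SL*SD) *\<^sub>R ULD - (SR*SD) *\<^sub>R URD - (SL*SU) *\<^sub>R ULU)
     - k *\<^sub>R (SU *\<^sub>R (FRU - FLU) - SD *\<^sub>R (FRD - FLD))
     - k *\<^sub>R (SR *\<^sub>R (GRU - GRD) - SL *\<^sub>R (GLU - GLD))
   = k *\<^sub>R (SU *\<^sub>R ((SR/2) *\<^sub>R URU - FRU) + SR *\<^sub>R ((SU/2) *\<^sub>R URU - GRU)
       + SU *\<^sub>R (FLU - (SL/2) *\<^sub>R ULU) + (-SL) *\<^sub>R ((SU/2) *\<^sub>R ULU - GLU)
       + (-SD) *\<^sub>R ((SR/2) *\<^sub>R URD - FRD) + SR *\<^sub>R (GRD - (SD/2) *\<^sub>R URD)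
       + (-SD) *\<^sub>R (FLD - (SL/2) *\<^sub>R ULD) + (-SL) *\<^sub>R (GLD - (SD/2) *\<^sub>R ULD))"
  by (simp add: vec_eq_iff field_simps)

theorem theorem1:
  fixes gam :: real and wRU wLU wLD wRD :: prim
  assumes "1 < gam" and "gam \<le> 2"
    and "prim_admissible wRU" "prim_admissible wLU"
    and "prim_admissible wLD" "prim_admissible wRD"
  defines "Ws \<equiv> {wLD, wRD, wLU, wRU}"
  defines "SL \<equiv> 2 * Min (lam_min gam 1 ` Ws)"
    and "SR \<equiv> 2 * Max (lam_max gam 1 ` Ws)"
    and "SD \<equiv> 2 * Min (lam_min gam 2 ` Ws)"
    and "SU \<equiv> 2 * Max (lam_max gam 2 ` Ws)"
  assumes "SL < 0" "0 < SR" "SD < 0" "0 < SU"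
  defines "Ustar \<equiv>
      (1 / ((SR - SL) * (SU - SD))) *\<^sub>R
        ((SR * SU) *\<^sub>R cons gam wRU + (SL * SD) *\<^sub>R cons gam wLD
         - (SR * SD) *\<^sub>R cons gam wRD - (SL * SU) *\<^sub>R cons gam wLU)
    - (1 / ((SR - SL) * (SU - SD))) *\<^sub>R
        (SU *\<^sub>R (flux gam 1 wRU - flux gam 1 wLU)
         - SD *\<^sub>R (flux gam 1 wRD - flux gam 1 wLD))
    - (1 / ((SR - SL) * (SU - SD))) *\<^sub>R
        (SR *\<^sub>R (flux gam 2 wRU - flux gam 2 wRD)
         - SL *\<^sub>R (flux gam 2 wLU - flux gam 2 wLD))"
  shows "Ustar \<in> adm_set \<and> Ustar$1 > 0 \<and> Ustar$4 > 0
         \<and> (Ustar$4)\<^sup>2 - (Ustar$1)\<^sup>2 - ((Ustar$2)\<^sup>2 + (Ustar$3)\<^sup>2) > 0"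
proof -
  note gam = \<open>1 < gam\<close> \<open>gam \<le> 2\<close>
  have fin: "finite Ws" unfolding Ws_def by simp
  have mem: "wRU \<in> Ws" "wLU \<in> Ws" "wLD \<in> Ws" "wRD \<in> Ws" unfolding Ws_def by auto
  have mx: "\<And>l x. x \<in> Ws \<Longrightarrow> lam_max gam l x \<le> Max (lam_max gam l ` Ws)"
    using fin by (intro Max_ge) auto
  have mn: "\<And>l x. x \<in> Ws \<Longrightarrow> Min (lam_min gam l ` Ws) \<le> lam_min gam l x"
    using fin by (intro Min_le) auto
  have SR2: "SR / 2 = Max (lam_max gam 1 ` Ws)" unfolding SR_def by simp
  have SU2: "SU / 2 = Max (lam_max gam 2 ` Ws)" unfolding SU_def by simp
  have SL2: "SL / 2 = Min (lam_min gam 1 ` Ws)" unfolding SL_def by simp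
  have SD2: "SD / 2 = Min (lam_min gam 2 ` Ws)" unfolding SD_def by simp
  have V1: "conep ((SR/2) *\<^sub>R cons gam wRU - flux gam 1 wRU)"
    by (rule max1[OF \<open>prim_admissible wRU\<close> gam]) (unfold SR2, rule mx[OF mem(1)])
  have V2: "conep ((SU/2) *\<^sub>R cons gam wRU - flux gam 2 wRU)"
    by (rule max2[OF \<open>prim_admissible wRU\<close> gam]) (unfold SU2, rule mx[OF mem(1)])
  have V3: "conep (flux gam 1 wLU - (SL/2) *\<^sub>R cons gam wLU)"
    by (rule min1[OF \<open>prim_admissible wLU\<close> gam]) (unfold SL2, rule mn[OF mem(2)])
  have V4: "conep ((SU/2) *\<^sub>R cons gam wLU - flux gam 2 wLU)"
    by (rule max2[OF \<open>prim_admissible wLU\<close> gam]) (unfold SU2, rule mx[OF mem(2)])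
  have V5: "conep ((SR/2) *\<^sub>R cons gam wRD - flux gam 1 wRD)"
    by (rule max1[OF \<open>prim_admissible wRD\<close> gam]) (unfold SR2, rule mx[OF mem(4)])
  have V6: "conep (flux gam 2 wRD - (SD/2) *\<^sub>R cons gam wRD)"
    by (rule min2[OF \<open>prim_admissible wRD\<close> gam]) (unfold SD2, rule mn[OF mem(4)])
  have V7: "conep (flux gam 1 wLD - (SL/2) *\<^sub>R cons gam wLD)"
    by (rule min1[OF \<open>prim_admissible wLD\<close> gam]) (unfold SL2, rule mn[OF mem(3)])
  have V8: "conep (flux gam 2 wLD - (SD/2) *\<^sub>R cons gam wLD)"
    by (rule min2[OF \<open>prim_admissible wLD\<close> gam]) (unfold SD2, rule mn[OF mem(3)])
  have pos: "SU > 0" "SR > 0" "- SL > 0" "- SD > 0" using \<open>SL < 0\<close> \<open>0 < SR\<close> \<open>SD < 0\<close> \<open>0 < SU\<close> by linarith+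
  have den: "1 / ((SR - SL) * (SU - SD)) > 0" using pos by (simp only: zero_less_divide_1_iff) (intro mult_pos_pos; linarith)
  have eq: "Ustar = (1 / ((SR - SL) * (SU - SD))) *\<^sub>R
      (SU *\<^sub>R ((SR/2) *\<^sub>R cons gam wRU - flux gam 1 wRU) + SR *\<^sub>R ((SU/2) *\<^sub>R cons gam wRU - flux gam 2 wRU)
       + SU *\<^sub>R (flux gam 1 wLU - (SL/2) *\<^sub>R cons gam wLU) + (-SL) *\<^sub>R ((SU/2) *\<^sub>R cons gam wLU - flux gam 2 wLU)
       + (-SD) *\<^sub>R ((SR/2) *\<^sub>R cons gam wRD - flux gam 1 wRD) + SR *\<^sub>R (flux gam 2 wRD - (SD/2) *\<^sub>R cons gam wRD)
       + (-SD) *\<^sub>R (flux gam 1 wLD - (SL/2) *\<^sub>R cons gam wLD) + (-SL) *\<^sub>R (flux gam 2 wLD - (SD/2) *\<^sub>R cons gam wLD))"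
    unfolding Ustar_def by (rule comb)
  have "conep Ustar"
    unfolding eq
    by (intro conep_scale[OF _ den] conep_add conep_scale[OF V1 pos(1)] conep_scale[OF V2 pos(2)]
        conep_scale[OF V3 pos(1)] conep_scale[OF V4 pos(3)] conep_scale[OF V5 pos(4)]
        conep_scale[OF V6 pos(2)] conep_scale[OF V7 pos(4)] conep_scale[OF V8 pos(3)])
  then show ?thesis by (rule conep_adm)
qed

end
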